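(* Let $F$ be any algebraically closed field and let $G_F$ be the group of polynomial automorphisms of the affine space $\mathbb{A}^3_F$ generated by the three maps $m_1(x,y,z)=(yz-x,y,z)$, $m_2(x,y,z)=(x,xz-y,z)$, $m_3(x,y,z)=(x,y,xy-z)$. Then the homomorphism from the free product $\mathbb{Z}/2*\mathbb{Z}/2*\mathbb{Z}/2$ to $G_F$ sending the generator of the $i$-th factor to $m_i$ is an isomorphism; i.e. $G_F\cong\mathbb{Z}/2*\mathbb{Z}/2*\mathbb{Z}/2$, the only relations among $m_1,m_2,m_3$ being $m_i^2=1$.
   Context: Each $m_i$ is a polynomial involution of $F^3$ (with integer coefficients). *)

theory Defs
  imports "HOL-Computational_Algebra.Polynomial" "HOL-Algebra.Bij" "HOL-Algebra.Generated_Groups"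
begin

definition alg_closed :: "'a::field itself \<Rightarrow> bool" where
  "alg_closed _ \<longleftrightarrow> (\<forall>p :: 'a poly. degree p \<ge> 1 \<longrightarrow> (\<exists>x. poly p x = 0))"

fun mmap :: "nat \<Rightarrow> 'a::field \<times> 'a \<times> 'a \<Rightarrow> 'a \<times> 'a \<times> 'a" where
  "mmap i (x, y, z) =
     (if i = 1 then (y * z - x, y, z)
      else if i = 2 then (x, x * z - y, z)
      else (x, y, x * y - z))"

text \<open>Free product Z/2 * Z/2 * Z/2 realised on reduced words over the letters 1,2,3
  (no two adjacent letters equal); product = concatenation followed by free reduction
  using the relations (letter)^2 = 1.\<close>
fun push :: "nat \<Rightarrow> nat list \<Rightarrow> nat list" where
  "push a [] = [a]"
| "push a (b # s) = (if a = b then s else a # b # s)"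

fun red :: "nat list \<Rightarrow> nat list" where
  "red [] = []"
| "red (a # w) = push a (red w)"

definition reduced_word :: "nat list \<Rightarrow> bool" where
  "reduced_word w \<longleftrightarrow> set w \<subseteq> {1, 2, 3} \<and> (\<forall>i. Suc i < length w \<longrightarrow> w ! i \<noteq> w ! Suc i)"

definition Z2_free_product3 :: "nat list monoid" where
  "Z2_free_product3 = \<lparr>carrier = {w. reduced_word w}, mult = (\<lambda>u v. red (u @ v)), one = []\<rparr>"

definition G_F :: "'a::field itself \<Rightarrow> ('a \<times> 'a \<times> 'a \<Rightarrow> 'a \<times> 'a \<times> 'a) monoid" where
  "G_F _ = (BijGroup UNIV) \<lparr>carrier := generate (BijGroup UNIV) {mmap 1, mmap 2, mmap 3}\<rparr>"

definition word_map :: "nat list \<Rightarrow> ('a::field \<times> 'a \<times> 'a \<Rightarrow> 'a \<times> 'a \<times> 'a)" where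
  "word_map w = foldr (\<lambda>i f. mmap i \<circ> f) w id"

end

theory Submission
  imports Defs
begin

lemma mmap_inv[simp]: "mmap i (mmap i p) = p"
  by (cases p) auto

lemma mmap_comp_self[simp]: "mmap i \<circ> mmap i = id"
  by (rule ext) simp

lemma word_map_Nil[simp]: "word_map [] = id"
  by (simp add: word_map_def)

lemma word_map_Cons[simp]: "word_map (a # w) = mmap a \<circ> word_map w"
  by (simp add: word_map_def)

lemma word_map_append: "word_map (u @ v) = word_map u \<circ> word_map v"
  by (induction u) (auto simp: comp_assoc)

lemma word_map_push: "word_map (push a s) = mmap a \<circ> word_map s"
  by (cases s) (auto simp flip: comp_assoc)

lemma word_map_red: "word_map (red w) = word_map w"
  by (induction w) (auto simp: word_map_push)

fun rw :: "nat list \<Rightarrow> bool" where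
  "rw [] = True"
| "rw [a] = (a \<in> {1,2,3})"
| "rw (a # b # s) = (a \<in> {1,2,3} \<and> a \<noteq> b \<and> rw (b # s))"

lemma reduced_word_rw: "reduced_word w = rw w"
proof (induction w rule: rw.induct)
  case 1 then show ?case by (simp add: reduced_word_def)
next
  case (2 a) then show ?case by (simp add: reduced_word_def)
next
  case (3 a b s)
  have "reduced_word (a # b # s) = (a \<in> {1,2,3} \<and> a \<noteq> b \<and> reduced_word (b # s))"
    unfolding reduced_word_def
    apply (auto simp: nth_Cons split: nat.splits)
    done
  then show ?case using 3 by simp
qed

lemma rw_push: "rw s \<Longrightarrow> a \<in> {1,2,3} \<Longrightarrow> rw (push a s)"
  by (cases s rule: rw.cases) auto

lemma rw_red: "set w \<subseteq> {1,2,3} \<Longrightarrow> rw (red w)"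
  by (induction w) (auto intro!: rw_push)

lemma rw_set: "rw w \<Longrightarrow> set w \<subseteq> {1,2,3}"
  by (induction w rule: rw.induct) auto

lemma rw_tl: "rw (a # w) \<Longrightarrow> rw w"
  by (cases w) auto

fun mp :: "nat \<Rightarrow> 'a::field poly \<times> 'a poly \<times> 'a poly \<Rightarrow> 'a poly \<times> 'a poly \<times> 'a poly" where
  "mp i (x, y, z) =
     (if i = 1 then (y * z - x, y, z)
      else if i = 2 then (x, x * z - y, z)
      else (x, y, x * y - z))"

lemma mp_inv[simp]: "mp i (mp i p) = p"
  by (cases p) auto

definition ev :: "'a::field \<Rightarrow> 'a poly \<times> 'a poly \<times> 'a poly \<Rightarrow> 'a \<times> 'a \<times> 'a" where
  "ev t P = (poly (fst P) t, poly (fst (snd P)) t, poly (snd (snd P)) t)"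

lemma ev_mp: "ev t (mp i P) = mmap i (ev t P)"
  by (cases P) (auto simp: ev_def)

definition S :: "nat list \<Rightarrow> 'a::field poly \<times> 'a poly \<times> 'a poly" where
  "S w = foldr mp w ([:0,1:], [:0,1:], [:0,1:])"

lemma S_Nil: "S [] = ([:0,1:], [:0,1:], [:0,1:])"
  by (simp add: S_def)

lemma S_Cons[simp]: "S (a # w) = mp a (S w)"
  by (simp add: S_def)

lemma ev_S: "ev t (S w) = word_map w (t, t, t)"
  by (induction w) (auto simp: ev_mp, simp add: S_def ev_def)

definition Inv3 :: "nat \<Rightarrow> 'a::field poly \<times> 'a poly \<times> 'a poly \<Rightarrow> bool" where
  "Inv3 a P = (case P of (p, q, r) \<Rightarrow>
     degree p \<ge> 1 \<and> degree q \<ge> 1 \<and> degree r \<ge> 1 \<and>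
     (a = 1 \<longrightarrow> degree p = degree q + degree r) \<and>
     (a = 2 \<longrightarrow> degree q = degree p + degree r) \<and>
     (a = 3 \<longrightarrow> degree r = degree p + degree q))"

lemma dlem:
  fixes p q r :: "'a::field poly"
  assumes "degree p < degree q + degree r" "degree q \<ge> 1" "degree r \<ge> 1"
  shows "degree (q * r - p) = degree q + degree r"
proof -
  have "q \<noteq> 0" "r \<noteq> 0" using assms by auto
  then have d: "degree (q * r) = degree q + degree r" by (simp add: degree_mult_eq)
  have "degree (q * r + (- p)) = degree (q * r)"
    by (rule degree_add_eq_left) (use assms d in simp)
  then show ?thesis using d by simp
qed

lemma Inv_step:
  fixes P :: "'a::field poly \<times> 'a poly \<times> 'a poly"
  assumes "Inv3 b P" "a \<noteq> b" "a \<in> {1,2,3}" "b \<in> {1,2,3}"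
  shows "Inv3 a (mp a P)"
proof -
  obtain p q r where P: "P = (p, q, r)" by (cases P)
  have H: "degree p \<ge> 1" "degree q \<ge> 1" "degree r \<ge> 1"
     "b = 1 \<longrightarrow> degree p = degree q + degree r"
     "b = 2 \<longrightarrow> degree q = degree p + degree r"
     "b = 3 \<longrightarrow> degree r = degree p + degree q"
    using assms(1) unfolding P Inv3_def by auto
  consider "a = 1" | "a = 2" | "a = 3" using assms(3) by blast
  then show ?thesis
  proof cases
    case 1
    have "b = 2 \<or> b = 3" using assms(2,4) 1 by auto
    then have ineq: "degree p < degree q + degree r"
    proof
      assume "b = 2" then have "degree q = degree p + degree r" using H by blast
      then show ?thesis using H(1-3) by linarith
    next
      assume "b = 3" then have "degree r = degree p + degree q" using H by blast
      then show ?thesis using H(1-3) by linarith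
    qed
    have "degree (q * r - p) = degree q + degree r" using ineq H(1-3) by (intro dlem) auto
    then show ?thesis using H(1-3) 1 unfolding P Inv3_def by simp
  next
    case 2
    have "b = 1 \<or> b = 3" using assms(2,4) 2 by auto
    then have ineq: "degree q < degree p + degree r"
    proof
      assume "b = 1" then have "degree p = degree q + degree r" using H by blast
      then show ?thesis using H(1-3) by linarith
    next
      assume "b = 3" then have "degree r = degree p + degree q" using H by blast
      then show ?thesis using H(1-3) by linarith
    qed
    have "degree (p * r - q) = degree p + degree r" using ineq H(1-3) by (intro dlem) auto
    then show ?thesis using H(1-3) 2 unfolding P Inv3_def by simp
  next
    case 3
    have "b = 1 \<or> b = 2" using assms(2,4) 3 by auto
    then have ineq: "degree r < degree p + degree q"
    proof
      assume "b = 1" then have "degree p = degree q + degree r" using H by blast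
      then show ?thesis using H(1-3) by linarith
    next
      assume "b = 2" then have "degree q = degree p + degree r" using H by blast
      then show ?thesis using H(1-3) by linarith
    qed
    have "degree (p * q - r) = degree p + degree q" using ineq H(1-3) by (intro dlem) auto
    then show ?thesis using H(1-3) 3 unfolding P Inv3_def by simp
  qed
qed

lemma Inv_base_gen:
  fixes x :: "'a::field poly"
  assumes "a \<in> {1,2,3}" "degree x = 1"
  shows "Inv3 a (mp a (x, x, x))"
proof -
  have "degree (x * x - x) = 2" using dlem[of x x x] assms(2) by simp
  then show ?thesis using assms by (auto simp: Inv3_def)
qed

lemma Inv_base:
  assumes "a \<in> {1,2,3}"
  shows "Inv3 a (mp a ([:0,1:], [:0,1:], [:0,1:]) :: 'a::field poly \<times> 'a poly \<times> 'a poly)"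
  by (rule Inv_base_gen[OF assms]) simp

lemma Inv_S: "rw (a # w) \<Longrightarrow> Inv3 a (S (a # w) :: 'a::field poly \<times> 'a poly \<times> 'a poly)"
proof (induction w arbitrary: a)
  case Nil
  have "a \<in> {1,2,3}" using Nil by simp
  then show ?case unfolding S_Cons S_Nil by (rule Inv_base)
next
  case (Cons b w)
  have rbw: "rw (b # w)" using Cons.prems by simp
  then have i: "Inv3 b (S (b # w) :: 'a poly \<times> 'a poly \<times> 'a poly)" using Cons.IH[of b] by simp
  have "a \<noteq> b" "a \<in> {1,2,3}" "b \<in> {1,2,3}" using Cons.prems rw_set[OF rbw] by auto
  from Inv_step[OF i this] show ?case by (simp only: S_Cons)
qed

lemma nat_aux:
  fixes dp dq dr a b :: nat
  assumes "dp \<ge> 1" "dq \<ge> 1" "dr \<ge> 1"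
    "a = 1 \<longrightarrow> dp = dq + dr" "a = 2 \<longrightarrow> dq = dp + dr" "a = 3 \<longrightarrow> dr = dp + dq"
    "b = 1 \<longrightarrow> dp = dq + dr" "b = 2 \<longrightarrow> dq = dp + dr" "b = 3 \<longrightarrow> dr = dp + dq"
    "a = 1 \<or> a = 2 \<or> a = 3" "b = 1 \<or> b = 2 \<or> b = 3"
  shows "a = b"
  using assms by presburger

lemma Inv_unique:
  assumes "Inv3 a P" "Inv3 b P" "a \<in> {1,2,3}" "b \<in> {1,2,3}"
  shows "a = b"
proof -
  obtain p q r where P: "P = (p, q, r)" by (cases P)
  have H1: "degree p \<ge> 1 \<and> degree q \<ge> 1 \<and> degree r \<ge> 1 \<and>
     (a = 1 \<longrightarrow> degree p = degree q + degree r) \<and>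
     (a = 2 \<longrightarrow> degree q = degree p + degree r) \<and>
     (a = 3 \<longrightarrow> degree r = degree p + degree q)"
    using assms(1) unfolding P Inv3_def by simp
  have H2: "(b = 1 \<longrightarrow> degree p = degree q + degree r) \<and>
     (b = 2 \<longrightarrow> degree q = degree p + degree r) \<and>
     (b = 3 \<longrightarrow> degree r = degree p + degree q)"
    using assms(2) unfolding P Inv3_def by simp
  have "a = 1 \<or> a = 2 \<or> a = 3" "b = 1 \<or> b = 2 \<or> b = 3" using assms(3,4) by auto
  with nat_aux[of "degree p" "degree q" "degree r" a b] H1 H2 show ?thesis by blast
qed

lemma Inv_not_base: "Inv3 a P \<Longrightarrow> a \<in> {1,2,3} \<Longrightarrow> P \<noteq> ([:0,1:], [:0,1:], [:0,1:])"
  by (auto simp: Inv3_def)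

lemma S_inj: "rw u \<Longrightarrow> rw v \<Longrightarrow> S u = (S v :: 'a::field poly \<times> 'a poly \<times> 'a poly) \<Longrightarrow> u = v"
proof (induction u arbitrary: v)
  case Nil
  show ?case
  proof (cases v)
    case (Cons b w)
    have "Inv3 b (S v :: 'a poly \<times> 'a poly \<times> 'a poly)" using Nil Cons Inv_S by blast
    moreover have "b \<in> {1,2,3}" using rw_set[OF Nil(2)] Cons by auto
    ultimately show ?thesis using Nil Inv_not_base by (fastforce simp: S_def)
  qed simp
next
  case (Cons a u)
  show ?case
  proof (cases v)
    case Nil
    have "Inv3 a (S (a # u) :: 'a poly \<times> 'a poly \<times> 'a poly)" using Cons Inv_S by blast
    moreover have "a \<in> {1,2,3}" using rw_set[OF Cons.prems(1)] by auto
    ultimately show ?thesis using Cons.prems Nil Inv_not_base by (fastforce simp: S_def)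
  next
    fix b w assume Cons2: "v = b # w"
    have "Inv3 a (S (a # u) :: 'a poly \<times> 'a poly \<times> 'a poly)" using Cons Inv_S by blast
    moreover have "Inv3 b (S (a # u) :: 'a poly \<times> 'a poly \<times> 'a poly)"
      using Cons.prems Cons2 Inv_S by metis
    moreover have "a \<in> {1,2,3}" "b \<in> {1,2,3}" using rw_set[OF Cons.prems(1)] rw_set[OF Cons.prems(2)] Cons2 by auto
    ultimately have ab: "a = b" using Inv_unique by blast
    have "S u = (S w :: 'a poly \<times> 'a poly \<times> 'a poly)"
      using Cons.prems(3) Cons2 ab by (metis S_Cons mp_inv)
    then have "u = w" using Cons.IH Cons.prems Cons2 rw_tl by blast
    then show ?thesis using ab Cons2 by simp
  qed
qed

lemma alg_closed_infinite:
  assumes "alg_closed TYPE('a::field)"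
  shows "infinite (UNIV :: 'a set)"
proof
  assume fin: "finite (UNIV :: 'a set)"
  define P :: "'a poly" where "P = (\<Prod>a\<in>UNIV. [:-a, 1:])"
  have "degree P = (\<Sum>a\<in>(UNIV::'a set). 1)"
    unfolding P_def by (subst degree_prod_eq_sum_degree) auto
  also have "\<dots> = card (UNIV :: 'a set)" by simp
  finally have dP: "degree P \<ge> 1" using fin by (simp add: card_gt_0_iff Suc_le_eq)
  have "degree (P + 1) = degree P" by (rule degree_add_eq_left) (use dP in simp)
  with dP obtain x where "poly (P + 1) x = 0"
    using assms[unfolded alg_closed_def, rule_format, of "P+1"] by auto
  moreover have "poly P x = 0" unfolding P_def poly_prod using fin
    by (simp add: prod_zero_iff[OF fin])
  ultimately show False by simp
qed

lemma poly_ext_inf: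
  fixes p q :: "'a::field poly"
  assumes "infinite (UNIV :: 'a set)" "\<And>t. poly p t = poly q t"
  shows "p = q"
proof (rule ccontr)
  assume "p \<noteq> q"
  then have "finite {x. poly (p - q) x = 0}" by (intro poly_roots_finite) simp
  moreover have "{x. poly (p - q) x = 0} = UNIV" using assms(2) by auto
  ultimately show False using assms(1) by simp
qed

lemma mmap_bij: "bij (mmap i)"
  by (rule o_bij[of "mmap i"]) (simp_all add: fun_eq_iff)

lemma mmap_Bij: "mmap i \<in> Bij UNIV"
  unfolding Bij_def using mmap_bij by auto

lemma word_map_Bij: "word_map w \<in> Bij UNIV"
proof -
  have "bij (word_map w)"
  proof (induction w)
    case (Cons a w) then show ?case using bij_comp[OF Cons.IH mmap_bij[of a]] by (simp add: o_def)
  qed (simp add: bij_def)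
  then show ?thesis by (simp add: Bij_def)
qed

lemma BijG_mult: "f \<in> Bij UNIV \<Longrightarrow> g \<in> Bij UNIV \<Longrightarrow> f \<otimes>\<^bsub>BijGroup UNIV\<^esub> g = f \<circ> g"
  by (simp add: BijGroup_def compose_def fun_eq_iff)

abbreviation "GENS \<equiv> {mmap 1, mmap 2, mmap 3} :: ('a::field \<times> 'a \<times> 'a \<Rightarrow> 'a \<times> 'a \<times> 'a) set"

lemma BijG_carrier: "carrier (BijGroup UNIV) = Bij UNIV"
  by (simp add: BijGroup_def)

lemma BijG_one: "\<one>\<^bsub>BijGroup UNIV\<^esub> = id"
  by (simp add: BijGroup_def fun_eq_iff)

lemma mmap_inv_Bij: "inv\<^bsub>BijGroup UNIV\<^esub> (mmap i) = mmap i"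
  by (rule group.inv_equality[OF group_BijGroup])
     (simp_all add: BijG_mult mmap_Bij BijG_one BijG_carrier del: mmap.simps)

lemma word_map_single: "word_map [i] = mmap i"
  by simp

lemma gen_word: "rw w \<Longrightarrow> (word_map w :: 'a::field \<times> 'a \<times> 'a \<Rightarrow> _) \<in> generate (BijGroup UNIV) GENS"
proof (induction w)
  case Nil
  show ?case using generate.one[of "BijGroup UNIV" "GENS :: ('a \<times> 'a \<times> 'a \<Rightarrow> _) set"]
    by (simp add: BijG_one id_def)
next
  case (Cons a w)
  have a: "a \<in> {1,2,3}" using rw_set[OF Cons.prems] by simp
  have wm: "word_map w \<in> generate (BijGroup UNIV) (GENS :: ('a \<times> 'a \<times> 'a \<Rightarrow> _) set)"
    using Cons rw_tl by blast
  have mm: "mmap a \<in> generate (BijGroup UNIV) (GENS :: ('a \<times> 'a \<times> 'a \<Rightarrow> _) set)"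
    using a by (intro generate.incl) auto
  have "mmap a \<otimes>\<^bsub>BijGroup UNIV\<^esub> word_map w \<in> generate (BijGroup UNIV) (GENS :: ('a \<times> 'a \<times> 'a \<Rightarrow> _) set)"
    using generate.eng[OF mm wm] .
  then show ?case by (simp add: BijG_mult mmap_Bij word_map_Bij o_def del: mmap.simps)
qed

lemma word_gen:
  assumes "f \<in> generate (BijGroup UNIV) (GENS :: ('a::field \<times> 'a \<times> 'a \<Rightarrow> _) set)"
  shows "\<exists>w. rw w \<and> f = word_map w"
  using assms
proof (induction rule: generate.induct)
  case one
  show ?case by (rule exI[of _ "[]"]) (simp add: BijG_one)
next
  case (incl h)
  then obtain i where "i \<in> {1,2,3}" "h = mmap i" by auto
  then show ?case by (intro exI[of _ "[i]"]) (simp del: mmap.simps)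
next
  case (inv h)
  then obtain i where "i \<in> {1,2,3}" "h = mmap i" by auto
  then show ?case by (intro exI[of _ "[i]"]) (simp add: mmap_inv_Bij del: mmap.simps)
next
  case (eng h1 h2)
  then obtain u v where uv: "rw u" "h1 = word_map u" "rw v" "h2 = word_map v" by blast
  have "rw (red (u @ v))" using rw_set[OF uv(1)] rw_set[OF uv(3)] by (intro rw_red) auto
  moreover have "h1 \<otimes>\<^bsub>BijGroup UNIV\<^esub> h2 = word_map (red (u @ v))"
    using uv by (simp add: BijG_mult word_map_Bij word_map_red word_map_append)
  ultimately show ?case by blast
qed

lemma word_map_inj:
  assumes inf: "infinite (UNIV :: 'a::field set)" and u: "rw u" and v: "rw v"
    and eq: "(word_map u :: 'a \<times> 'a \<times> 'a \<Rightarrow> _) = word_map v"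
  shows "u = v"
proof -
  have e: "ev t (S u :: 'a poly \<times> 'a poly \<times> 'a poly) = ev t (S v)" for t
    by (simp add: ev_S eq)
  have "S u = (S v :: 'a poly \<times> 'a poly \<times> 'a poly)"
  proof (rule prod_eqI)
    show "fst (S u :: 'a poly \<times> 'a poly \<times> 'a poly) = fst (S v)"
      by (rule poly_ext_inf[OF inf]) (use e in \<open>simp add: ev_def\<close>)
    show "snd (S u :: 'a poly \<times> 'a poly \<times> 'a poly) = snd (S v)"
    proof (rule prod_eqI)
      show "fst (snd (S u :: 'a poly \<times> 'a poly \<times> 'a poly)) = fst (snd (S v))"
        by (rule poly_ext_inf[OF inf]) (use e in \<open>simp add: ev_def\<close>)
      show "snd (snd (S u :: 'a poly \<times> 'a poly \<times> 'a poly)) = snd (snd (S v))"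
        by (rule poly_ext_inf[OF inf]) (use e in \<open>simp add: ev_def\<close>)
    qed
  qed
  then show ?thesis using S_inj u v by blast
qed

theorem proposition1p5:
  assumes "alg_closed TYPE('a::field)"
  shows "(word_map :: nat list \<Rightarrow> ('a \<times> 'a \<times> 'a \<Rightarrow> 'a \<times> 'a \<times> 'a))
           \<in> iso Z2_free_product3 (G_F TYPE('a))"
proof -
  have inf: "infinite (UNIV :: 'a set)" by (rule alg_closed_infinite[OF assms])
  have cZ: "carrier Z2_free_product3 = {w. rw w}"
    by (simp add: Z2_free_product3_def reduced_word_rw)
  have cG: "carrier (G_F TYPE('a)) = generate (BijGroup UNIV) (GENS :: ('a \<times> 'a \<times> 'a \<Rightarrow> _) set)"
    by (simp add: G_F_def)
  have mZ: "x \<otimes>\<^bsub>Z2_free_product3\<^esub> y = red (x @ y)" for x y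
    by (simp add: Z2_free_product3_def)
  have mG: "f \<otimes>\<^bsub>G_F TYPE('a)\<^esub> g = f \<otimes>\<^bsub>BijGroup UNIV\<^esub> g" for f g :: "'a \<times> 'a \<times> 'a \<Rightarrow> _"
    by (simp add: G_F_def)
  have hom: "(word_map :: nat list \<Rightarrow> ('a \<times> 'a \<times> 'a \<Rightarrow> 'a \<times> 'a \<times> 'a)) \<in> hom Z2_free_product3 (G_F TYPE('a))"
    unfolding hom_def cZ cG mZ mG
    using gen_word by (auto simp: BijG_mult word_map_Bij word_map_red word_map_append)
  have inj: "inj_on (word_map :: nat list \<Rightarrow> ('a \<times> 'a \<times> 'a \<Rightarrow> 'a \<times> 'a \<times> 'a)) {w. rw w}"
    using word_map_inj[OF inf] by (auto simp: inj_on_def)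
  have img: "(word_map :: nat list \<Rightarrow> ('a \<times> 'a \<times> 'a \<Rightarrow> 'a \<times> 'a \<times> 'a)) ` {w. rw w}
      = generate (BijGroup UNIV) GENS"
    using gen_word word_gen by blast
  show ?thesis unfolding iso_def using hom inj img cZ cG by (simp add: bij_betw_def)
qed

end
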